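(* Let $X$ be a real Banach space with a normalized Schauder basis $\mathcal B=(e_n)_{n=1}^\infty$ with biorthogonal functionals $(e_n^* )$, let $\mathcal E=(\varepsilon_n)_{n=1}^\infty$ be a sequence of nonnegative numbers, and let $K=K_{\mathcal B,\mathcal E}$. If $r^{\rm ext}(K)<\infty$, then $\|x\|\le r^{\rm ext}(K)$ for every $x\in K$.
   Context: The brick is $K_{\mathcal B,\mathcal E}=\{x\in X:\ |e_n^*(x)|\le\varepsilon_n \text{ for all } n\}$. A point $x_0\in A$ is an extreme point of $A$ if for every nonzero $x\in X$ there is $\lambda\in[-1,1]$ with $x_0+\lambda x\notin A$. The extreme radius $r^{\rm ext}(K)$ is the supremum of $\|x_0\|$ over extreme points $x_0$ of $K$ if an extreme point exists, and $\infty$ otherwise. *)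

theory Defs
  imports "HOL-Analysis.Analysis"
begin

text \<open>Schauder basis (indexed from 0): every vector has a unique norm-convergent expansion.\<close>
definition schauder_basis :: "(nat \<Rightarrow> 'a::banach) \<Rightarrow> bool" where
  "schauder_basis e \<longleftrightarrow> (\<forall>x. \<exists>!a::nat \<Rightarrow> real. (\<lambda>n. a n *\<^sub>R e n) sums x)"

definition normalized_schauder_basis :: "(nat \<Rightarrow> 'a::banach) \<Rightarrow> bool" where
  "normalized_schauder_basis e \<longleftrightarrow> schauder_basis e \<and> (\<forall>n. norm (e n) = 1)"

definition coord :: "(nat \<Rightarrow> 'a::banach) \<Rightarrow> nat \<Rightarrow> 'a \<Rightarrow> real" where
  "coord e n x = (THE a::nat \<Rightarrow> real. (\<lambda>k. a k *\<^sub>R e k) sums x) n"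

definition brick :: "(nat \<Rightarrow> 'a::banach) \<Rightarrow> (nat \<Rightarrow> real) \<Rightarrow> 'a set" where
  "brick e eps = {x. \<forall>n. \<bar>coord e n x\<bar> \<le> eps n}"

definition extreme_pt :: "'a::real_vector set \<Rightarrow> 'a \<Rightarrow> bool" where
  "extreme_pt A x0 \<longleftrightarrow> x0 \<in> A \<and>
     (\<forall>x. x \<noteq> 0 \<longrightarrow> (\<exists>l::real. -1 \<le> l \<and> l \<le> 1 \<and> x0 + l *\<^sub>R x \<notin> A))"

definition ext_radius :: "'a::real_normed_vector set \<Rightarrow> ereal" where
  "ext_radius A = (if \<exists>x. extreme_pt A x
                   then (SUP x\<in>{x. extreme_pt A x}. ereal (norm x)) else \<infinity>)"

end

theory Submission
  imports Defs
begin

lemma coord_sums: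
  assumes "schauder_basis e" and "(\<lambda>n. a n *\<^sub>R e n) sums x"
  shows "coord e n x = a n"
proof -
  have u: "\<exists>!a::nat \<Rightarrow> real. (\<lambda>n. a n *\<^sub>R e n) sums x"
    using assms(1) unfolding schauder_basis_def by blast
  have "(THE a::nat \<Rightarrow> real. (\<lambda>k. a k *\<^sub>R e k) sums x) = a"
    using u assms(2) by (simp add: the1_equality)
  thus ?thesis unfolding coord_def by simp
qed

lemma coord_self:
  assumes "schauder_basis e"
  shows "(\<lambda>n. coord e n x *\<^sub>R e n) sums x"
proof -
  have u: "\<exists>!a::nat \<Rightarrow> real. (\<lambda>n. a n *\<^sub>R e n) sums x"
    using assms(1) unfolding schauder_basis_def by blast
  have "(\<lambda>k. (THE a::nat \<Rightarrow> real. (\<lambda>k. a k *\<^sub>R e k) sums x) k *\<^sub>R e k) sums x"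
    using theI'[OF u] by simp
  thus ?thesis unfolding coord_def .
qed

lemma coord_lin:
  assumes "schauder_basis e"
  shows "coord e n (x + l *\<^sub>R y) = coord e n x + l * coord e n y"
proof -
  have s1: "(\<lambda>n. coord e n x *\<^sub>R e n + l *\<^sub>R (coord e n y *\<^sub>R e n)) sums (x + l *\<^sub>R y)"
    by (intro sums_add sums_scaleR_right coord_self assms)
  have eq: "(\<lambda>n. coord e n x *\<^sub>R e n + l *\<^sub>R (coord e n y *\<^sub>R e n))
          = (\<lambda>n. (coord e n x + l * coord e n y) *\<^sub>R e n)"
    by (rule ext) (simp only: scaleR_add_left scaleR_scaleR)
  have "(\<lambda>n. (coord e n x + l * coord e n y) *\<^sub>R e n) sums (x + l *\<^sub>R y)"
    using s1 unfolding eq .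
  from coord_sums[OF assms this] show ?thesis .
qed

lemma coord_basis:
  assumes "schauder_basis e"
  shows "coord e n (e k) = (if n = k then 1 else 0)"
proof -
  have s1: "(\<lambda>n. if n = k then e n else 0) sums e k" by (rule sums_single)
  have eq: "(\<lambda>n. (if n = k then 1 else 0) *\<^sub>R e n) = (\<lambda>n. if n = k then e n else 0)"
  proof (rule ext)
    fix n show "(if n = k then 1 else 0) *\<^sub>R e n = (if n = k then e n else 0)"
      by (cases "n = k") simp_all
  qed
  have "(\<lambda>n. (if n = k then 1 else 0) *\<^sub>R e n) sums e k" unfolding eq by (rule s1)
  from coord_sums[OF assms this] show ?thesis .
qed

lemma coord_upd:
  assumes "schauder_basis e"
  shows "coord e n (x + a *\<^sub>R e k) = coord e n x + (if n = k then a else 0)"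
  unfolding coord_lin[OF assms, of n x a "e k"] coord_basis[OF assms, of n k] by simp

lemma coord_zero_imp:
  assumes "schauder_basis e" and "\<forall>n. coord e n y = 0"
  shows "y = 0"
proof -
  have "(\<lambda>n. coord e n y *\<^sub>R e n) sums y" by (rule coord_self[OF assms(1)])
  hence "(\<lambda>n. 0) sums y" using assms(2) by simp
  moreover have "(\<lambda>n. 0) sums (0::'a)" by (rule sums_zero)
  ultimately show ?thesis by (rule sums_unique2)
qed

lemma absadd: "(a::real) * b \<ge> 0 \<Longrightarrow> \<bar>a + b\<bar> = \<bar>a\<bar> + \<bar>b\<bar>"
  by (smt (verit) mult_nonneg_nonpos mult_nonpos_nonneg zero_le_mult_iff)

lemma extreme_if:
  assumes sb: "schauder_basis e" and all: "\<forall>n. \<bar>coord e n z\<bar> = eps n"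
  shows "extreme_pt (brick e eps) z"
  unfolding extreme_pt_def
proof (intro conjI allI impI)
  show "z \<in> brick e eps" using all unfolding brick_def by simp
  fix y :: 'a assume "y \<noteq> 0"
  then obtain k where k: "coord e k y \<noteq> 0" using coord_zero_imp[OF sb] by blast
  define l :: real where "l = (if coord e k z * coord e k y \<ge> 0 then 1 else -1)"
  have c: "coord e k (z + l *\<^sub>R y) = coord e k z + l * coord e k y"
    by (rule coord_lin[OF sb])
  have ez: "\<bar>coord e k z\<bar> = eps k" using all by blast
  have eq: "\<bar>coord e k z + l * coord e k y\<bar> = \<bar>coord e k z\<bar> + \<bar>coord e k y\<bar>"
  proof (cases "coord e k z * coord e k y \<ge> 0")
    case True
    then show ?thesis unfolding l_def using absadd[OF True] by simp
  next
    case False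
    hence "coord e k z * (- coord e k y) \<ge> 0" by simp
    from absadd[OF this] show ?thesis unfolding l_def using False by simp
  qed
  have gt: "\<bar>coord e k z + l * coord e k y\<bar> > eps k" using k ez eq by simp
  have "z + l *\<^sub>R y \<notin> brick e eps"
  proof
    assume "z + l *\<^sub>R y \<in> brick e eps"
    hence "\<bar>coord e k (z + l *\<^sub>R y)\<bar> \<le> eps k" unfolding brick_def by blast
    with c gt show False by simp
  qed
  moreover have "-1 \<le> l \<and> l \<le> 1" unfolding l_def by simp
  ultimately show "\<exists>l::real. -1 \<le> l \<and> l \<le> 1 \<and> z + l *\<^sub>R y \<notin> brick e eps" by blast
qed

lemma extreme_only:
  assumes sb: "normalized_schauder_basis e" and ex: "extreme_pt (brick e eps) z"
  shows "\<bar>coord e n z\<bar> = eps n"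
proof (rule ccontr)
  have s: "schauder_basis e" and nrm: "norm (e n) = 1"
    using sb unfolding normalized_schauder_basis_def by auto
  have zK: "z \<in> brick e eps" using ex unfolding extreme_pt_def by blast
  hence le: "\<bar>coord e n z\<bar> \<le> eps n" unfolding brick_def by blast
  assume "\<bar>coord e n z\<bar> \<noteq> eps n"
  with le have lt: "\<bar>coord e n z\<bar> < eps n" by simp
  define d where "d = eps n - \<bar>coord e n z\<bar>"
  have dpos: "d > 0" using lt unfolding d_def by simp
  have nz: "d *\<^sub>R e n \<noteq> 0" using dpos nrm by auto
  then obtain l :: real where l: "-1 \<le> l" "l \<le> 1" "z + l *\<^sub>R (d *\<^sub>R e n) \<notin> brick e eps"
    using ex unfolding extreme_pt_def by blast
  have "z + l *\<^sub>R (d *\<^sub>R e n) \<in> brick e eps"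
    unfolding brick_def
  proof (intro CollectI allI)
    fix m
    have cm: "coord e m (z + (l * d) *\<^sub>R e n) = coord e m z + (if m = n then l * d else 0)"
      by (rule coord_upd[OF s])
    show "\<bar>coord e m (z + l *\<^sub>R (d *\<^sub>R e n))\<bar> \<le> eps m"
    proof (cases "m = n")
      case True
      have "\<bar>l * d\<bar> \<le> d" using l(1,2) dpos by (simp add: abs_mult abs_le_iff)
      moreover have "\<bar>coord e n z + l * d\<bar> \<le> \<bar>coord e n z\<bar> + \<bar>l * d\<bar>"
        by (rule abs_triangle_ineq)
      ultimately have "\<bar>coord e n z + l * d\<bar> \<le> eps n"
        using d_def by linarith
      hence "\<bar>coord e m z + l * d\<bar> \<le> eps m" using True by simp
      then show ?thesis using cm True by simp
    next
      case False
      then show ?thesis using cm zK unfolding brick_def by simp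
    qed
  qed
  with l(3) show False by blast
qed

lemma key:
  assumes s: "schauder_basis e" and fin: "finite F"
    and cb: "\<forall>n. \<bar>c n\<bar> \<le> eps n"
    and bnd: "\<forall>z. (\<forall>n. \<bar>coord e n z\<bar> = eps n) \<longrightarrow> norm z \<le> (R::real)"
  shows "\<forall>z. (\<forall>n. \<bar>coord e n z\<bar> = eps n) \<longrightarrow>
           norm (z + (\<Sum>n\<in>F. (c n - coord e n z) *\<^sub>R e n)) \<le> R"
  using fin
proof (induction F rule: finite_induct)
  case empty
  then show ?case using bnd by simp
next
  case (insert k F)
  show ?case
  proof (intro allI impI)
    fix z assume zx: "\<forall>n. \<bar>coord e n z\<bar> = eps n"
    define W where "W = z + (\<Sum>n\<in>F. (c n - coord e n z) *\<^sub>R e n)"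
    have WR: "norm W \<le> R" using insert.IH zx unfolding W_def by blast
    have goal: "z + (\<Sum>n\<in>insert k F. (c n - coord e n z) *\<^sub>R e n) = W + (c k - coord e k z) *\<^sub>R e k"
      unfolding W_def using insert.hyps by (simp add: algebra_simps)
    have ek: "eps k \<ge> 0" using zx by (metis abs_ge_zero)
    show "norm (z + (\<Sum>n\<in>insert k F. (c n - coord e n z) *\<^sub>R e n)) \<le> R"
    proof (cases "eps k = 0")
      case True
      hence "c k = 0" "coord e k z = 0" using cb[rule_format, of k] zx[rule_format, of k] by auto
      then show ?thesis using goal WR by simp
    next
      case False
      hence ep: "eps k > 0" using ek by simp
      define a where "a = eps k - coord e k z"
      define b where "b = - eps k - coord e k z"
      define t where "t = (c k + eps k) / (2 * eps k)"
      have t0: "0 \<le> t" "t \<le> 1" using cb[rule_format, of k] ep unfolding t_def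
        by (auto simp: abs_le_iff field_simps)
      have tc: "t * a + (1 - t) * b = c k - coord e k z"
        unfolding t_def a_def b_def using ep by (simp add: field_simps)
      have gen: "norm (W + u *\<^sub>R e k) \<le> R" if u: "\<bar>coord e k z + u\<bar> = eps k" for u
      proof -
        define zp where "zp = z + u *\<^sub>R e k"
        have cz: "coord e n zp = coord e n z + (if n = k then u else 0)" for n
          unfolding zp_def by (rule coord_upd[OF s])
        have zpx: "\<forall>n. \<bar>coord e n zp\<bar> = eps n" using cz zx u by simp
        have "(\<Sum>n\<in>F. (c n - coord e n zp) *\<^sub>R e n) = (\<Sum>n\<in>F. (c n - coord e n z) *\<^sub>R e n)"
          using insert.hyps(2) cz by (intro sum.cong) auto
        hence "W + u *\<^sub>R e k = zp + (\<Sum>n\<in>F. (c n - coord e n zp) *\<^sub>R e n)"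
          unfolding W_def zp_def by (simp add: algebra_simps)
        thus ?thesis using insert.IH zpx by simp
      qed
      have Na: "norm (W + a *\<^sub>R e k) \<le> R" using gen[of a] ek unfolding a_def by simp
      have Nb: "norm (W + b *\<^sub>R e k) \<le> R" using gen[of b] ek unfolding b_def by simp
      have comb: "W + (c k - coord e k z) *\<^sub>R e k = t *\<^sub>R (W + a *\<^sub>R e k) + (1 - t) *\<^sub>R (W + b *\<^sub>R e k)"
      proof -
        have "t *\<^sub>R (W + a *\<^sub>R e k) + (1 - t) *\<^sub>R (W + b *\<^sub>R e k)
              = (t + (1 - t)) *\<^sub>R W + (t * a + (1 - t) * b) *\<^sub>R e k"
          by (simp add: scaleR_add_right scaleR_add_left scaleR_diff_left)
        also have "\<dots> = W + (c k - coord e k z) *\<^sub>R e k" using tc by simp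
        finally show ?thesis by simp
      qed
      have "norm (t *\<^sub>R (W + a *\<^sub>R e k) + (1 - t) *\<^sub>R (W + b *\<^sub>R e k))
            \<le> t * norm (W + a *\<^sub>R e k) + (1 - t) * norm (W + b *\<^sub>R e k)"
      proof -
        have "norm (t *\<^sub>R (W + a *\<^sub>R e k) + (1 - t) *\<^sub>R (W + b *\<^sub>R e k))
             \<le> norm (t *\<^sub>R (W + a *\<^sub>R e k)) + norm ((1 - t) *\<^sub>R (W + b *\<^sub>R e k))"
          by (rule norm_triangle_ineq)
        also have "\<dots> = t * norm (W + a *\<^sub>R e k) + (1 - t) * norm (W + b *\<^sub>R e k)"
          using t0 by simp
        finally show ?thesis .
      qed
      also have "\<dots> \<le> t * R + (1 - t) * R"
        using t0 Na Nb by (intro add_mono mult_left_mono) auto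
      also have "\<dots> = R" by (simp add: algebra_simps)
      finally show ?thesis using goal comb by simp
    qed
  qed
qed

theorem lemma3p3:
  fixes e :: "nat \<Rightarrow> 'a::banach" and eps :: "nat \<Rightarrow> real"
  assumes "normalized_schauder_basis e"
    and "\<forall>n. eps n \<ge> 0"
    and "ext_radius (brick e eps) < \<infinity>"
  shows "\<forall>x\<in>brick e eps. ereal (norm x) \<le> ext_radius (brick e eps)"
proof
  fix x assume xK: "x \<in> brick e eps"
  have s: "schauder_basis e" using assms(1) unfolding normalized_schauder_basis_def by blast
  let ?K = "brick e eps"
  have exs: "\<exists>z. extreme_pt ?K z"
  proof (rule ccontr)
    assume "\<not> (\<exists>z. extreme_pt ?K z)"
    hence "ext_radius ?K = \<infinity>" unfolding ext_radius_def by auto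
    with assms(3) show False by simp
  qed
  then obtain z0 where z0: "extreme_pt ?K z0" by blast
  have up: "ereal (norm z) \<le> ext_radius ?K" if "extreme_pt ?K z" for z
    using exs that unfolding ext_radius_def by (auto intro!: SUP_upper)
  have "ext_radius ?K \<noteq> -\<infinity>" using up[OF z0] by auto
  with assms(3) obtain R where R: "ext_radius ?K = ereal R"
    by (cases "ext_radius ?K") auto
  have bnd: "\<forall>z. (\<forall>n. \<bar>coord e n z\<bar> = eps n) \<longrightarrow> norm z \<le> R"
    using up extreme_if[OF s] R by auto
  have z0x: "\<forall>n. \<bar>coord e n z0\<bar> = eps n" using extreme_only[OF assms(1) z0] by blast
  have cb: "\<forall>n. \<bar>coord e n x\<bar> \<le> eps n" using xK unfolding brick_def by blast
  define v where "v N = z0 + (\<Sum>n\<in>{..<N}. (coord e n x - coord e n z0) *\<^sub>R e n)" for N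
  have vb: "norm (v N) \<le> R" for N
    using key[OF s finite_lessThan[of N] cb bnd] z0x unfolding v_def by blast
  have vs: "v N = z0 - (\<Sum>n<N. coord e n z0 *\<^sub>R e n) + (\<Sum>n<N. coord e n x *\<^sub>R e n)" for N
    unfolding v_def by (simp add: scaleR_diff_left sum_subtractf)
  have lx: "(\<lambda>N. \<Sum>n<N. coord e n x *\<^sub>R e n) \<longlonglongrightarrow> x"
    using coord_self[OF s, of x] unfolding sums_def .
  have lz: "(\<lambda>N. \<Sum>n<N. coord e n z0 *\<^sub>R e n) \<longlonglongrightarrow> z0"
    using coord_self[OF s, of z0] unfolding sums_def .
  have "(\<lambda>N. z0 - (\<Sum>n<N. coord e n z0 *\<^sub>R e n) + (\<Sum>n<N. coord e n x *\<^sub>R e n)) \<longlonglongrightarrow> z0 - z0 + x"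
    by (intro tendsto_add tendsto_diff tendsto_const lx lz)
  hence "v \<longlonglongrightarrow> x" unfolding vs[abs_def] by simp
  hence "(\<lambda>N. norm (v N)) \<longlonglongrightarrow> norm x" by (rule tendsto_norm)
  hence "norm x \<le> R" using vb by (intro LIMSEQ_le_const2) auto
  thus "ereal (norm x) \<le> ext_radius ?K" using R by simp
qed

end
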